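(* Consider an instance of the Steiner Team Orienteering Problem and the formulation $\mathcal{F}_2$ as described in the context, and let $\mathcal{K}$ be the set of conflicting vertex pairs. For every feasible solution $(x,y,f,\varphi)$ of $\mathcal{F}_2$, every pair $\langle i,j\rangle\in\mathcal{K}$ and every $V\subseteq N\setminus\{t\}$ with $\{i,j\}\subseteq V$, we have $\sum_{e\in\delta^+(V)}x_e\ge y_i+y_j$.
   Context: An instance of the Steiner Team Orienteering Problem (STOP) consists of: a digraph $G=(N,A)$; an origin $s\in N$ and a destination $t\in N$ with $s\neq t$; disjoint sets $S,P\subseteq N\setminus\{s,t\}$ (mandatory and profitable vertices) with $N=S\cup P\cup\{s,t\}$; rewards $p_i\in\mathbb{Z}^+$ for $i\in P$; traverse times $d_{ij}\in\mathbb{R}^+$ for $(i,j)\in A$; a number $m$ of vehicles and a time limit $T$. For $i\in N$ let $\delta^+(i)=\{j\in N:(i,j)\in A\}$ and $\delta^-(i)=\{j\in N:(j,i)\in A\}$; for $V\subseteq N$ let $\delta^+(V)=\{(i,j)\in A: i\in V, j\in N\setminus V\}$ and $\delta^-(V)=\{(i,j)\in A: i\in N\setminus V, j\in V\}$. For $i,j\in N$, $R_{ij}$ denotes the minimum of $\sum_{a\in A_p}d_a$ over all paths $p$ from $i$ to $j$ in $G$ (with arc set $A_p$), and $R_{ii}=0$. $\mathcal{K}$ is the set of pairs $\langle i,j\rangle$ with $i,j\in N\setminus\{s,t\}$ such that every route from $s$ to $t$ in $G$ visiting both $i$ and $j$ (in any order) has total traverse time (sum of $d$ over its arcs) exceeding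 $T$. $\mathcal{F}_2$: maximize $\sum_{i\in P}p_iy_i$ over $x\in\{0,1\}^A$, $y\in\{0,1\}^N$, $f\in\mathbb{R}^A$, $\varphi\in\mathbb{R}$ subject to: $y_i=1$ for all $i\in S\cup\{s,t\}$; $\sum_{j\in\delta^+(i)}x_{ij}=y_i$ for all $i\in S\cup P$; $\sum_{j\in\delta^+(s)}x_{sj}=\sum_{i\in\delta^-(t)}x_{it}=m-\varphi$; $\sum_{i\in\delta^-(s)}x_{is}=\sum_{j\in\delta^+(t)}x_{tj}=0$; $\sum_{j\in\delta^+(i)}x_{ij}-\sum_{j\in\delta^-(i)}x_{ji}=0$ for all $i\in S\cup P$; $f_{sj}=(T-d_{sj})x_{sj}$ for all $j\in\delta^+(s)$; $\sum_{j\in\delta^-(i)}f_{ji}-\sum_{j\in\delta^+(i)}f_{ij}=\sum_{j\in\delta^+(i)}d_{ij}x_{ij}$ for all $i\in S\cup P$; $f_{ij}\le(T-R_{si}-d_{ij})x_{ij}$ for all $(i,j)\in A$ with $i\neq s$; $f_{ij}\ge R_{jt}x_{ij}$ for all $(i,j)\in A$; $f\ge0$; $0\le\varphi\le m$. *)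

theory Defs
  imports Complex_Main "HOL-Library.Extended_Real"
begin

definition out_nbrs :: "('v \<times> 'v) set \<Rightarrow> 'v set \<Rightarrow> 'v \<Rightarrow> 'v set" where
  "out_nbrs A N i = {j \<in> N. (i, j) \<in> A}"

definition in_nbrs :: "('v \<times> 'v) set \<Rightarrow> 'v set \<Rightarrow> 'v \<Rightarrow> 'v set" where
  "in_nbrs A N i = {j \<in> N. (j, i) \<in> A}"

definition out_cut :: "('v \<times> 'v) set \<Rightarrow> 'v set \<Rightarrow> 'v set \<Rightarrow> ('v \<times> 'v) set" where
  "out_cut A N V = {(i, j) \<in> A. i \<in> V \<and> j \<in> N - V}"

definition is_path :: "'v set \<Rightarrow> ('v \<times> 'v) set \<Rightarrow> 'v \<Rightarrow> 'v \<Rightarrow> 'v list \<Rightarrow> bool" where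
  "is_path N A u v p \<longleftrightarrow> p \<noteq> [] \<and> hd p = u \<and> last p = v \<and> set p \<subseteq> N \<and> distinct p
     \<and> (\<forall>k. Suc k < length p \<longrightarrow> (p ! k, p ! Suc k) \<in> A)"

definition path_time :: "('v \<times> 'v \<Rightarrow> real) \<Rightarrow> 'v list \<Rightarrow> real" where
  "path_time d p = sum_list (map d (zip p (tl p)))"

text \<open>R_{ij}: shortest path time from i to j (R_{ii} = 0; +infinity if no path).\<close>
definition R :: "'v set \<Rightarrow> ('v \<times> 'v) set \<Rightarrow> ('v \<times> 'v \<Rightarrow> real) \<Rightarrow> 'v \<Rightarrow> 'v \<Rightarrow> ereal" where
  "R N A d i j = (if i = j then 0 else Inf {ereal (path_time d p) | p. is_path N A i j p})"

definition conflicting ::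
  "'v set \<Rightarrow> ('v \<times> 'v) set \<Rightarrow> 'v \<Rightarrow> 'v \<Rightarrow> ('v \<times> 'v \<Rightarrow> real) \<Rightarrow> real \<Rightarrow> 'v \<Rightarrow> 'v \<Rightarrow> bool" where
  "conflicting N A s t d T i j \<longleftrightarrow>
     i \<in> N - {s, t} \<and> j \<in> N - {s, t} \<and>
     (\<forall>p. is_path N A s t p \<and> i \<in> set p \<and> j \<in> set p \<longrightarrow> path_time d p > T)"

definition stop_instance ::
  "'v set \<Rightarrow> ('v \<times> 'v) set \<Rightarrow> 'v \<Rightarrow> 'v \<Rightarrow> 'v set \<Rightarrow> 'v set \<Rightarrow> ('v \<Rightarrow> int)
    \<Rightarrow> ('v \<times> 'v \<Rightarrow> real) \<Rightarrow> nat \<Rightarrow> real \<Rightarrow> bool" where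
  "stop_instance N A s t S P p d m T \<longleftrightarrow>
     finite N \<and> A \<subseteq> N \<times> N \<and> (\<forall>i. (i, i) \<notin> A) \<and>
     s \<in> N \<and> t \<in> N \<and> s \<noteq> t \<and>
     S \<subseteq> N - {s, t} \<and> P \<subseteq> N - {s, t} \<and> S \<inter> P = {} \<and> N = S \<union> P \<union> {s, t} \<and>
     (\<forall>i\<in>P. p i > 0) \<and> (\<forall>a\<in>A. d a > 0)"

definition F2_feasible ::
  "'v set \<Rightarrow> ('v \<times> 'v) set \<Rightarrow> 'v \<Rightarrow> 'v \<Rightarrow> 'v set \<Rightarrow> 'v set
    \<Rightarrow> ('v \<times> 'v \<Rightarrow> real) \<Rightarrow> nat \<Rightarrow> real
    \<Rightarrow> ('v \<times> 'v \<Rightarrow> real) \<Rightarrow> ('v \<Rightarrow> real) \<Rightarrow> ('v \<times> 'v \<Rightarrow> real) \<Rightarrow> real \<Rightarrow> bool" where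
  "F2_feasible N A s t S P d m T x y f \<phi> \<longleftrightarrow>
     (\<forall>a\<in>A. x a \<in> {0, 1}) \<and> (\<forall>i\<in>N. y i \<in> {0, 1}) \<and>
     (\<forall>i \<in> S \<union> {s, t}. y i = 1) \<and>
     (\<forall>i \<in> S \<union> P. (\<Sum>j\<in>out_nbrs A N i. x (i, j)) = y i) \<and>
     (\<Sum>j\<in>out_nbrs A N s. x (s, j)) = real m - \<phi> \<and>
     (\<Sum>i\<in>in_nbrs A N t. x (i, t)) = real m - \<phi> \<and>
     (\<Sum>i\<in>in_nbrs A N s. x (i, s)) = 0 \<and>
     (\<Sum>j\<in>out_nbrs A N t. x (t, j)) = 0 \<and>
     (\<forall>i \<in> S \<union> P. (\<Sum>j\<in>out_nbrs A N i. x (i, j)) - (\<Sum>j\<in>in_nbrs A N i. x (j, i)) = 0) \<and>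
     (\<forall>j \<in> out_nbrs A N s. f (s, j) = (T - d (s, j)) * x (s, j)) \<and>
     (\<forall>i \<in> S \<union> P. (\<Sum>j\<in>in_nbrs A N i. f (j, i)) - (\<Sum>j\<in>out_nbrs A N i. f (i, j))
                    = (\<Sum>j\<in>out_nbrs A N i. d (i, j) * x (i, j))) \<and>
     (\<forall>(i, j)\<in>A. i \<noteq> s \<longrightarrow>
          ereal (f (i, j)) \<le> (ereal T - R N A d s i - ereal (d (i, j))) * ereal (x (i, j))) \<and>
     (\<forall>(i, j)\<in>A. ereal (f (i, j)) \<ge> R N A d j t * ereal (x (i, j))) \<and>
     (\<forall>a\<in>A. f a \<ge> 0) \<and>
     0 \<le> \<phi> \<and> \<phi> \<le> real m"

end

theory Submission
  imports Defs
begin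

fun xw :: "('v \<times> 'v) set \<Rightarrow> 'v list \<Rightarrow> bool" where
  "xw X [] = False"
| "xw X [v] = True"
| "xw X (u # v # w) = ((u, v) \<in> X \<and> xw X (v # w))"

lemma xw_ne: "xw X w \<Longrightarrow> w \<noteq> []"
  by (cases w) auto

lemma xw_Cons: "xw X (x # w) \<longleftrightarrow> (w = [] \<or> ((x, hd w) \<in> X \<and> xw X w))"
  by (cases w) auto

lemma xw_append:
  "a \<noteq> [] \<Longrightarrow> b \<noteq> [] \<Longrightarrow> xw X (a @ b) \<longleftrightarrow> xw X a \<and> xw X b \<and> (last a, hd b) \<in> X"
proof (induction a)
  case Nil then show ?case by simp
next
  case (Cons x a)
  show ?case
  proof (cases "a = []")
    case True then show ?thesis using Cons.prems by (auto simp: xw_Cons)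
  next
    case False
    then show ?thesis using Cons by (auto simp: xw_Cons)
  qed
qed

lemma xw_glue:
  assumes "xw X a" "xw X b" "last a = hd b"
  shows "xw X (a @ tl b)"
proof (cases "tl b = []")
  case True then show ?thesis using assms by simp
next
  case False
  have b: "b = hd b # tl b" using xw_ne[OF assms(2)] by simp
  have "(hd b, hd (tl b)) \<in> X" "xw X (tl b)" using assms(2) False
    by (metis b xw_Cons)+
  then show ?thesis using xw_append[of a "tl b" X] assms False xw_ne[OF assms(1)] by simp
qed

lemma last_glue: "b \<noteq> [] \<Longrightarrow> a \<noteq> [] \<Longrightarrow> last a = hd b \<Longrightarrow> last (a @ tl b) = last b"
  by (cases b) auto

lemma xw_nth: "xw X w \<Longrightarrow> Suc k < length w \<Longrightarrow> (w ! k, w ! Suc k) \<in> X"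
proof (induction w arbitrary: k)
  case Nil then show ?case by simp
next
  case (Cons x w)
  show ?case
  proof (cases k)
    case 0 then show ?thesis using Cons.prems by (cases w) auto
  next
    case (Suc k') then show ?thesis using Cons by (cases w) auto
  qed
qed

lemma path_time_Cons:
  "path_time d (c # w) = (if w = [] then 0 else d (c, hd w) + path_time d w)"
  by (cases w) (auto simp: path_time_def)

lemma path_time_snoc2: "path_time d (w @ [a, b]) = path_time d (w @ [a]) + d (a, b)"
proof (induction w)
  case Nil then show ?case by (simp add: path_time_Cons)
next
  case (Cons c w)
  then show ?case by (cases w) (auto simp: path_time_Cons)
qed

lemma crossing:
  "hd w \<in> V \<Longrightarrow> last w \<notin> V \<Longrightarrow> w \<noteq> [] \<Longrightarrow> \<exists>w1 u v w2. w = w1 @ u # v # w2 \<and> u \<in> V \<and> v \<notin> V"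
proof (induction w)
  case Nil then show ?case by simp
next
  case (Cons a w)
  have wne: "w \<noteq> []" using Cons.prems by auto
  show ?case
  proof (cases "hd w \<in> V")
    case False
    then show ?thesis using Cons.prems wne
      by (intro exI[of _ "[]"] exI[of _ a] exI[of _ "hd w"] exI[of _ "tl w"]) auto
  next
    case True
    then obtain w1 u v w2 where "w = w1 @ u # v # w2" "u \<in> V" "v \<notin> V"
      using Cons wne by auto
    then show ?thesis by (intro exI[of _ "a # w1"]) auto
  qed
qed

locale stopctx =
  fixes N :: "'v set" and A X :: "('v \<times> 'v) set" and s t :: 'v
    and d f :: "'v \<times> 'v \<Rightarrow> real" and T :: real
  assumes finX: "finite X"
    and XA: "X \<subseteq> A"
    and XN: "\<And>u v. (u, v) \<in> X \<Longrightarrow> u \<in> N \<and> v \<in> N"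
    and nos: "\<And>u. (u, s) \<notin> X"
    and no_t: "\<And>v. (t, v) \<notin> X"
    and st: "s \<noteq> t"
    and succ_ex: "\<And>u v. (u, v) \<in> X \<Longrightarrow> v \<noteq> t \<Longrightarrow> \<exists>w. (v, w) \<in> X"
    and pred_ex: "\<And>v w. (v, w) \<in> X \<Longrightarrow> v \<noteq> s \<Longrightarrow> \<exists>u. (u, v) \<in> X"
    and pred_un: "\<And>u u' v. (u, v) \<in> X \<Longrightarrow> (u', v) \<in> X \<Longrightarrow> v \<noteq> t \<Longrightarrow> u = u'"
    and fcons: "\<And>u v w. (u, v) \<in> X \<Longrightarrow> (v, w) \<in> X \<Longrightarrow> f (v, w) = f (u, v) - d (v, w)"
    and fs: "\<And>v. (s, v) \<in> X \<Longrightarrow> f (s, v) = T - d (s, v)"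
    and fpos: "\<And>a. a \<in> X \<Longrightarrow> f a \<ge> 0"
    and dpos: "\<And>a. a \<in> X \<Longrightarrow> d a > 0"
begin

lemma back_ex:
  assumes "(u, v) \<in> X" shows "\<exists>q. xw X q \<and> hd q = s \<and> last q = u"
proof -
  have "\<forall>u v. (u, v) \<in> X \<longrightarrow> card {a \<in> X. f a > f (u, v)} = n \<longrightarrow> (\<exists>q. xw X q \<and> hd q = s \<and> last q = u)" for n
  proof (induction n rule: less_induct)
    case (less n)
    show ?case
    proof (intro allI impI)
      fix u v assume uv: "(u, v) \<in> X" and n: "card {a \<in> X. f a > f (u, v)} = n"
      show "\<exists>q. xw X q \<and> hd q = s \<and> last q = u"
      proof (cases "u = s")
        case True then show ?thesis by (intro exI[of _ "[s]"]) simp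
      next
        case False
        then obtain w where wu: "(w, u) \<in> X" using pred_ex uv by blast
        have fl: "f (w, u) > f (u, v)" using fcons[OF wu uv] dpos[OF uv] by simp
        have sub: "{a \<in> X. f a > f (w, u)} \<subset> {a \<in> X. f a > f (u, v)}" using fl wu by auto
        have "card {a \<in> X. f a > f (w, u)} < n" using psubset_card_mono[OF _ sub] finX n by auto
        then obtain q where q: "xw X q" "hd q = s" "last q = w" using less.IH wu by blast
        have "xw X (q @ [u])" using xw_append[of q "[u]" X] q wu xw_ne[OF q(1)] by simp
        then show ?thesis using q xw_ne[OF q(1)] by (intro exI[of _ "q @ [u]"]) simp
      qed
    qed
  qed
  then show ?thesis using assms by blast
qed

lemma fwd_ex:
  assumes "(u, v) \<in> X" shows "\<exists>r. xw X r \<and> hd r = v \<and> last r = t"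
proof -
  have "\<forall>u v. (u, v) \<in> X \<longrightarrow> card {a \<in> X. f a < f (u, v)} = n \<longrightarrow> (\<exists>r. xw X r \<and> hd r = v \<and> last r = t)" for n
  proof (induction n rule: less_induct)
    case (less n)
    show ?case
    proof (intro allI impI)
      fix u v assume uv: "(u, v) \<in> X" and n: "card {a \<in> X. f a < f (u, v)} = n"
      show "\<exists>r. xw X r \<and> hd r = v \<and> last r = t"
      proof (cases "v = t")
        case True then show ?thesis by (intro exI[of _ "[t]"]) simp
      next
        case False
        then obtain w where vw: "(v, w) \<in> X" using succ_ex uv by blast
        have fl: "f (v, w) < f (u, v)" using fcons[OF uv vw] dpos[OF vw] by simp
        have sub: "{a \<in> X. f a < f (v, w)} \<subset> {a \<in> X. f a < f (u, v)}" using fl vw by auto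
        have "card {a \<in> X. f a < f (v, w)} < n" using psubset_card_mono[OF _ sub] finX n by auto
        then obtain r where r: "xw X r" "hd r = w" "last r = t" using less.IH vw by blast
        have "xw X (v # r)" using r vw xw_ne[OF r(1)] by (simp add: xw_Cons)
        then show ?thesis using r xw_ne[OF r(1)] by (intro exI[of _ "v # r"]) simp
      qed
    qed
  qed
  then show ?thesis using assms by blast
qed

lemma time_eq:
  "xw X (w @ [u, v]) \<Longrightarrow> hd (w @ [u, v]) = s \<Longrightarrow> path_time d (w @ [u, v]) = T - f (u, v)"
proof (induction w arbitrary: u v rule: rev_induct)
  case Nil
  then show ?case using fs[of v] by (simp add: path_time_def)
next
  case (snoc z w)
  have e: "(w @ [z]) @ [u, v] = (w @ [z, u]) @ [v]" by simp
  have x1: "xw X (w @ [z, u])" and uv: "(u, v) \<in> X"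
    using snoc.prems(1) xw_append[of "w @ [z, u]" "[v]" X] by (simp_all only: e) auto
  have zu: "(z, u) \<in> X" using x1 xw_append[of "w @ [z]" "[u]" X] by simp
  have h: "hd (w @ [z, u]) = s" using snoc.prems(2) by (cases w) auto
  have "path_time d (w @ [z, u]) = T - f (z, u)" using snoc.IH[OF x1 h] .
  moreover have "path_time d ((w @ [z]) @ [u, v]) = path_time d (w @ [z, u]) + d (u, v)"
    using path_time_snoc2[of d "w @ [z]" u v] by simp
  ultimately show ?case using fcons[OF zu uv] by simp
qed

lemma time_le:
  assumes "xw X W" "hd W = s" "last W = t" shows "path_time d W \<le> T"
proof -
  obtain W' v where W: "W = W' @ [v]" using xw_ne[OF assms(1)] by (metis rev_exhaust)
  have "W' \<noteq> []" using assms st W by auto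
  then obtain w u where "W' = w @ [u]" by (metis rev_exhaust)
  then have W2: "W = w @ [u, v]" using W by simp
  have "(u, v) \<in> X" using assms(1) xw_append[of "w @ [u]" "[v]" X] W2 by simp
  then show ?thesis using time_eq[of w u v] assms W2 fpos by fastforce
qed

lemma walk_unique:
  "xw X w1 \<Longrightarrow> xw X w2 \<Longrightarrow> hd w1 = s \<Longrightarrow> hd w2 = s \<Longrightarrow> last w1 = last w2 \<Longrightarrow> last w1 \<noteq> t \<Longrightarrow> w1 = w2"
proof (induction w1 arbitrary: w2 rule: rev_induct)
  case Nil then show ?case by simp
next
  case (snoc z w1)
  obtain w2' z' where w2: "w2 = w2' @ [z']" using xw_ne[OF snoc.prems(2)] by (metis rev_exhaust)
  have zz: "z' = z" using snoc.prems(5) w2 by simp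
  show ?case
  proof (cases "w1 = []")
    case True
    then have zs: "z = s" using snoc.prems(3) by simp
    have "w2' = []"
    proof (rule ccontr)
      assume "w2' \<noteq> []"
      then have "(last w2', z) \<in> X" using snoc.prems(2) w2 zz xw_append[of w2' "[z']" X] by simp
      then show False using zs nos by simp
    qed
    then show ?thesis using True w2 zz by simp
  next
    case False
    have lz: "(last w1, z) \<in> X" and x1: "xw X w1"
      using snoc.prems(1) False xw_append[of w1 "[z]" X] by simp_all
    have w2ne: "w2' \<noteq> []"
    proof
      assume "w2' = []"
      then have "z = s" using snoc.prems(4) w2 zz by simp
      then show False using lz nos by simp
    qed
    have lz2: "(last w2', z) \<in> X" and x2: "xw X w2'"
      using snoc.prems(2) w2 zz w2ne xw_append[of w2' "[z]" X] by simp_all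
    have zt: "z \<noteq> t" using snoc.prems(6) by simp
    have ll: "last w1 = last w2'" using pred_un[OF lz lz2 zt] .
    have "last w1 \<noteq> t" using lz no_t by metis
    moreover have "hd w1 = s" using snoc.prems(3) False by simp
    moreover have "hd w2' = s" using snoc.prems(4) w2 w2ne by simp
    ultimately have "w1 = w2'" using snoc.IH[OF x1 x2] ll by simp
    then show ?thesis using w2 zz by simp
  qed
qed

lemma walk_distinct: "xw X w \<Longrightarrow> hd w = s \<Longrightarrow> distinct w"
proof (induction w rule: rev_induct)
  case Nil then show ?case by simp
next
  case (snoc z w)
  show ?case
  proof (cases "w = []")
    case True then show ?thesis by simp
  next
    case False
    have xw: "xw X w" using snoc.prems(1) False xw_append[of w "[z]" X] by simp
    have hw: "hd w = s" using snoc.prems(2) False by simp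
    have "z \<notin> set w"
    proof
      assume "z \<in> set w"
      then obtain w1 w2 where w: "w = w1 @ z # w2" by (metis split_list)
      have e: "w @ [z] = (w1 @ [z]) @ (w2 @ [z])" using w by simp
      have "xw X (w1 @ [z])" and nx: "(z, hd (w2 @ [z])) \<in> X"
        using snoc.prems(1) xw_append[of "w1 @ [z]" "w2 @ [z]" X] unfolding e by auto
      moreover have "hd (w1 @ [z]) = s" using hw w by (cases w1) auto
      moreover have "z \<noteq> t" using nx no_t by metis
      ultimately have "w1 @ [z] = w @ [z]" using walk_unique[of "w1 @ [z]" "w @ [z]"] snoc.prems by simp
      then show False using w by simp
    qed
    then show ?thesis using snoc.IH[OF xw hw] by simp
  qed
qed

lemma xw_setN: "xw X (x # w) \<Longrightarrow> w \<noteq> [] \<Longrightarrow> set (x # w) \<subseteq> N"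
proof (induction w arbitrary: x)
  case Nil then show ?case by simp
next
  case (Cons y w)
  have "(x, y) \<in> X" using Cons.prems by simp
  then have xy: "x \<in> N" "y \<in> N" using XN by auto
  show ?case
  proof (cases "w = []")
    case True then show ?thesis using xy by simp
  next
    case False
    have "xw X (y # w)" using Cons.prems by simp
    then have "set (y # w) \<subseteq> N" using Cons.IH[of y] False by simp
    then show ?thesis using xy by simp
  qed
qed

lemma walk_path:
  assumes "xw X W" "hd W = s" "last W = t" shows "is_path N A s t W"
proof -
  obtain x w where W: "W = x # w" using xw_ne[OF assms(1)] by (cases W) auto
  have "w \<noteq> []" using assms st W by auto
  then have "set W \<subseteq> N" using xw_setN assms W by simp
  moreover have "distinct W" using walk_distinct assms by simp
  moreover have "\<forall>k. Suc k < length W \<longrightarrow> (W ! k, W ! Suc k) \<in> A"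
    using xw_nth[OF assms(1)] XA by blast
  ultimately show ?thesis using assms xw_ne unfolding is_path_def by blast
qed

lemma route:
  assumes iw: "(i, w) \<in> X" and iV: "i \<in> V" and tV: "t \<notin> V"
  shows "\<exists>Ai u v W. xw X Ai \<and> hd Ai = s \<and> last Ai = u \<and> i \<in> set Ai \<and> (u, v) \<in> X \<and> u \<in> V
     \<and> v \<notin> V \<and> xw X W \<and> hd W = s \<and> last W = t \<and> set Ai \<subseteq> set W"
proof -
  obtain q where q: "xw X q" "hd q = s" "last q = i" using back_ex[OF iw] by blast
  obtain r where r: "xw X r" "hd r = w" "last r = t" using fwd_ex[OF iw] by blast
  define R where "R = i # r"
  have rne: "r \<noteq> []" using xw_ne[OF r(1)] .
  have xR: "xw X R" using r iw rne unfolding R_def by (simp add: xw_Cons)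
  have hR: "hd R \<in> V" using iV unfolding R_def by simp
  have lR: "last R \<notin> V" using tV r(3) rne unfolding R_def by simp
  have nR: "R \<noteq> []" unfolding R_def by simp
  obtain w1 u v w2 where R: "R = w1 @ u # v # w2" "u \<in> V" "v \<notin> V"
    using crossing[OF hR lR nR] by blast
  have e: "R = (w1 @ [u]) @ (v # w2)" using R by simp
  have x1: "xw X (w1 @ [u])" and uv: "(u, v) \<in> X"
    using xR xw_append[of "w1 @ [u]" "v # w2" X] unfolding e by auto
  have h1: "hd (w1 @ [u]) = i" using e unfolding R_def by (cases w1) auto
  define Ai where "Ai = q @ tl (w1 @ [u])"
  define W where "W = q @ tl R"
  have qne: "q \<noteq> []" using xw_ne[OF q(1)] .
  have a1: "xw X Ai" unfolding Ai_def using xw_glue[OF q(1) x1] q h1 by simp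
  have a2: "hd Ai = s" using q qne unfolding Ai_def by simp
  have a3: "last Ai = u" unfolding Ai_def using last_glue[of "w1 @ [u]" q] q h1 qne by simp
  have a4: "i \<in> set Ai" using q qne unfolding Ai_def by auto
  have a5: "xw X W" unfolding W_def using xw_glue[OF q(1) xR] q unfolding R_def by simp
  have a6: "hd W = s" unfolding W_def using q qne by simp
  have a7: "last W = t" unfolding W_def using last_glue[of R q] q r rne unfolding R_def by simp
  have tR: "tl R = tl (w1 @ [u]) @ v # w2" unfolding e by (rule tl_append2) simp
  have a8: "set Ai \<subseteq> set W" unfolding Ai_def W_def tR by auto
  show ?thesis
    apply (rule exI[of _ Ai], rule exI[of _ u], rule exI[of _ v], rule exI[of _ W])
    using a1 a2 a3 a4 a5 a6 a7 a8 uv R(2) R(3) by simp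
qed

end


lemma sum01_ex1:
  fixes g :: "'a \<Rightarrow> real"
  assumes "finite B" "\<forall>b\<in>B. g b \<in> {0, 1}" "sum g B \<ge> 1"
  shows "\<exists>b\<in>B. g b = 1"
proof (rule ccontr)
  assume "\<not> ?thesis"
  then have "\<forall>b\<in>B. g b = 0" using assms(2) by auto
  then have "sum g B = 0" by simp
  then show False using assms(3) by simp
qed

lemma sum01_ge:
  fixes g :: "'a \<Rightarrow> real"
  assumes "finite B" "\<forall>b\<in>B. g b \<in> {0, 1}" "b \<in> B" "g b = 1"
  shows "sum g B \<ge> 1"
proof -
  have "g b \<le> sum g B" using member_le_sum[of b B g] assms by force
  then show ?thesis using assms by simp
qed

lemma sum01_unique:
  fixes g :: "'a \<Rightarrow> real"
  assumes "finite B" "\<forall>b\<in>B. g b \<in> {0, 1}" "sum g B \<le> 1" "b1 \<in> B" "b2 \<in> B" "g b1 = 1" "g b2 = 1"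
  shows "b1 = b2"
proof (rule ccontr)
  assume ne: "b1 \<noteq> b2"
  have "sum g {b1, b2} \<le> sum g B"
    by (rule sum_mono2) (use assms in force)+
  then show False using ne assms by simp
qed

lemma sum01_zero:
  fixes g :: "'a \<Rightarrow> real"
  assumes "finite B" "\<forall>b\<in>B. g b \<in> {0, 1}" "sum g B = 0" "b \<in> B"
  shows "g b = 0"
proof -
  have "\<forall>b\<in>B. g b \<ge> 0" using assms(2) by force
  then show ?thesis using sum_nonneg_eq_0_iff[OF assms(1)] assms by blast
qed

lemma sum_single_nz:
  fixes h :: "'a \<Rightarrow> real"
  assumes "finite B" "b \<in> B" "\<forall>c\<in>B. c \<noteq> b \<longrightarrow> h c = 0"
  shows "sum h B = h b"
proof -
  have "sum h B = h b + sum h (B - {b})" using sum.remove[OF assms(1,2)] .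
  moreover have "sum h (B - {b}) = 0" using assms(3) by (intro sum.neutral) auto
  ultimately show ?thesis by simp
qed

theorem corollary2:
  fixes N :: "'v set" and A :: "('v \<times> 'v) set" and s t :: 'v and S P :: "'v set"
    and p :: "'v \<Rightarrow> int" and d :: "'v \<times> 'v \<Rightarrow> real" and m :: nat and T :: real
    and x :: "'v \<times> 'v \<Rightarrow> real" and y :: "'v \<Rightarrow> real" and f :: "'v \<times> 'v \<Rightarrow> real" and \<phi> :: real
    and i j :: 'v and V :: "'v set"
  assumes "stop_instance N A s t S P p d m T"
    and "F2_feasible N A s t S P d m T x y f \<phi>"
    and "conflicting N A s t d T i j"
    and "V \<subseteq> N - {t}" and "{i, j} \<subseteq> V"
  shows "(\<Sum>e\<in>out_cut A N V. x e) \<ge> y i + y j"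
proof -
  note I = assms(1)[unfolded stop_instance_def]
  note F = assms(2)[unfolded F2_feasible_def]
  note C = assms(3)[unfolded conflicting_def]
  define X where "X = {a \<in> A. x a = 1}"
  have finN: "finite N" using I by blast
  have AN: "A \<subseteq> N \<times> N" using I by blast
  have finA: "finite A" using finite_subset[OF AN] finN by blast
  have x01: "\<forall>a\<in>A. x a \<in> {0, 1}" using F by blast
  have y01: "\<forall>v\<in>N. y v \<in> {0, 1}" using F by blast
  have SP: "S \<union> P = N - {s, t}"
  proof -
    have "S \<subseteq> N - {s, t}" "P \<subseteq> N - {s, t}" "N = S \<union> P \<union> {s, t}" using I by blast+
    then show ?thesis by blast
  qed
  have st: "s \<noteq> t" "s \<in> N" "t \<in> N" using I by blast+
  have finout: "finite (out_nbrs A N v)" for v using finN unfolding out_nbrs_def by simp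
  have finin: "finite (in_nbrs A N v)" for v using finN unfolding in_nbrs_def by simp
  have xout01: "\<forall>w\<in>out_nbrs A N v. x (v, w) \<in> {0, 1}" for v using x01 unfolding out_nbrs_def by auto
  have xin01: "\<forall>w\<in>in_nbrs A N v. x (w, v) \<in> {0, 1}" for v using x01 unfolding in_nbrs_def by auto
  have outy: "v \<in> N - {s, t} \<Longrightarrow> (\<Sum>w\<in>out_nbrs A N v. x (v, w)) = y v" for v
    using F SP by auto
  have inout: "v \<in> N - {s, t} \<Longrightarrow> (\<Sum>w\<in>in_nbrs A N v. x (w, v)) = (\<Sum>w\<in>out_nbrs A N v. x (v, w))" for v
    using F SP by auto
  have yle: "v \<in> N \<Longrightarrow> y v \<le> 1" for v using y01 by force
  have XN: "(u, v) \<in> X \<Longrightarrow> u \<in> N \<and> v \<in> N" for u v using AN unfolding X_def by auto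
  have nos: "(u, s) \<notin> X" for u
  proof
    assume a: "(u, s) \<in> X"
    have "u \<in> in_nbrs A N s" using a XN unfolding X_def in_nbrs_def by auto
    moreover have "(\<Sum>w\<in>in_nbrs A N s. x (w, s)) = 0" using F by simp
    ultimately have "x (u, s) = 0" using sum01_zero[OF finin xin01] by blast
    then show False using a unfolding X_def by simp
  qed
  have no_t: "(t, v) \<notin> X" for v
  proof
    assume a: "(t, v) \<in> X"
    have "v \<in> out_nbrs A N t" using a XN unfolding X_def out_nbrs_def by auto
    moreover have "(\<Sum>w\<in>out_nbrs A N t. x (t, w)) = 0" using F by simp
    ultimately have "x (t, v) = 0" using sum01_zero[OF finout xout01] by blast
    then show False using a unfolding X_def by simp
  qed
  have inner: "v \<in> N - {s, t}" if "(u, v) \<in> X" "(v, w) \<in> X" for u v w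
    using that XN nos no_t by blast
  have succ_ex: "\<exists>w. (v, w) \<in> X" if uv: "(u, v) \<in> X" "v \<noteq> t" for u v
  proof -
    have vM: "v \<in> N - {s, t}" using uv XN nos by blast
    have "u \<in> in_nbrs A N v" using uv XN unfolding X_def in_nbrs_def by auto
    then have "(\<Sum>w\<in>in_nbrs A N v. x (w, v)) \<ge> 1"
      using sum01_ge[OF finin xin01] uv unfolding X_def by auto
    then have "(\<Sum>w\<in>out_nbrs A N v. x (v, w)) \<ge> 1" using inout[OF vM] by simp
    then obtain w where "w \<in> out_nbrs A N v" "x (v, w) = 1" using sum01_ex1[OF finout xout01] by blast
    then show ?thesis unfolding X_def out_nbrs_def by auto
  qed
  have pred_ex: "\<exists>u. (u, v) \<in> X" if vw: "(v, w) \<in> X" "v \<noteq> s" for v w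
  proof -
    have vM: "v \<in> N - {s, t}" using vw XN no_t by blast
    have "w \<in> out_nbrs A N v" using vw XN unfolding X_def out_nbrs_def by auto
    then have "(\<Sum>w\<in>out_nbrs A N v. x (v, w)) \<ge> 1"
      using sum01_ge[OF finout xout01] vw unfolding X_def by auto
    then have "(\<Sum>w\<in>in_nbrs A N v. x (w, v)) \<ge> 1" using inout[OF vM] by simp
    then obtain u where "u \<in> in_nbrs A N v" "x (u, v) = 1" using sum01_ex1[OF finin xin01] by blast
    then show ?thesis unfolding X_def in_nbrs_def by auto
  qed
  have pred_un: "u = u'" if "(u, v) \<in> X" "(u', v) \<in> X" "v \<noteq> t" for u u' v
  proof -
    have vM: "v \<in> N - {s, t}" using that XN nos by blast
    have "(\<Sum>w\<in>in_nbrs A N v. x (w, v)) \<le> 1" using inout[OF vM] outy[OF vM] yle vM by simp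
    moreover have "u \<in> in_nbrs A N v" "u' \<in> in_nbrs A N v"
      using that XN unfolding X_def in_nbrs_def by auto
    ultimately show ?thesis using sum01_unique[OF finin xin01] that unfolding X_def by auto
  qed
  have succ_un: "w = w'" if "(v, w) \<in> X" "(v, w') \<in> X" "v \<noteq> s" for v w w'
  proof -
    have vM: "v \<in> N - {s, t}" using that XN no_t by blast
    have "(\<Sum>w\<in>out_nbrs A N v. x (v, w)) \<le> 1" using outy[OF vM] yle vM by simp
    moreover have "w \<in> out_nbrs A N v" "w' \<in> out_nbrs A N v"
      using that XN unfolding X_def out_nbrs_def by auto
    ultimately show ?thesis using sum01_unique[OF finout xout01] that unfolding X_def by auto
  qed
  have fnn: "\<forall>a\<in>A. f a \<ge> 0" using F by simp
  have fzero: "f (a, b) = 0" if ab: "(a, b) \<in> A" "(a, b) \<notin> X" for a b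
  proof -
    have x0: "x (a, b) = 0" using x01 ab unfolding X_def by auto
    have "f (a, b) \<le> 0"
    proof (cases "a = s")
      case True
      then have "b \<in> out_nbrs A N s" using ab AN unfolding out_nbrs_def by auto
      then have "f (s, b) = (T - d (s, b)) * x (s, b)" using F by blast
      then show ?thesis using True x0 by simp
    next
      case False
      then have "ereal (f (a, b)) \<le> (ereal T - R N A d s a - ereal (d (a, b))) * ereal (x (a, b))"
        using F ab by blast
      then show ?thesis using x0 by (simp add: zero_ereal_def[symmetric])
    qed
    then show ?thesis using fnn ab by force
  qed
  have fcons: "f (v, w) = f (u, v) - d (v, w)" if uv: "(u, v) \<in> X" and vw: "(v, w) \<in> X" for u v w
  proof -
    have vM: "v \<in> N - {s, t}" using inner[OF uv vw] .
    have cons: "(\<Sum>j\<in>in_nbrs A N v. f (j, v)) - (\<Sum>j\<in>out_nbrs A N v. f (v, j))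
                    = (\<Sum>j\<in>out_nbrs A N v. d (v, j) * x (v, j))" using F vM SP by blast
    have uin: "u \<in> in_nbrs A N v" using uv XN unfolding X_def in_nbrs_def by auto
    have wout: "w \<in> out_nbrs A N v" using vw XN unfolding X_def out_nbrs_def by auto
    have "(\<Sum>j\<in>in_nbrs A N v. f (j, v)) = f (u, v)"
    proof (rule sum_single_nz[OF finin uin], intro ballI impI)
      fix c assume c: "c \<in> in_nbrs A N v" "c \<noteq> u"
      have "(c, v) \<notin> X" using pred_un[OF uv _] vM c by blast
      then show "f (c, v) = 0" using fzero c unfolding in_nbrs_def by blast
    qed
    moreover have "(\<Sum>j\<in>out_nbrs A N v. f (v, j)) = f (v, w)"
    proof (rule sum_single_nz[OF finout wout], intro ballI impI)
      fix c assume c: "c \<in> out_nbrs A N v" "c \<noteq> w"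
      have "(v, c) \<notin> X" using succ_un[OF vw] vM c by blast
      then show "f (v, c) = 0" using fzero c unfolding out_nbrs_def by blast
    qed
    moreover have "(\<Sum>j\<in>out_nbrs A N v. d (v, j) * x (v, j)) = d (v, w) * x (v, w)"
    proof (rule sum_single_nz[OF finout wout], intro ballI impI)
      fix c assume c: "c \<in> out_nbrs A N v" "c \<noteq> w"
      have "(v, c) \<notin> X" using succ_un[OF vw] vM c by blast
      then have "x (v, c) = 0" using x01 c unfolding X_def out_nbrs_def by auto
      then show "d (v, c) * x (v, c) = 0" by simp
    qed
    moreover have "x (v, w) = 1" using vw unfolding X_def by simp
    ultimately show ?thesis using cons by simp
  qed
  have fs: "f (s, v) = T - d (s, v)" if "(s, v) \<in> X" for v
  proof -
    have "v \<in> out_nbrs A N s" using that XN unfolding X_def out_nbrs_def by auto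
    then have "f (s, v) = (T - d (s, v)) * x (s, v)" using F by blast
    then show ?thesis using that unfolding X_def by simp
  qed
  have ctx: "stopctx N A X s t d f T"
  proof
    show "finite X" using finA unfolding X_def by simp
    show "X \<subseteq> A" unfolding X_def by auto
    show "\<And>u v. (u, v) \<in> X \<Longrightarrow> u \<in> N \<and> v \<in> N" by (rule XN)
    show "\<And>u. (u, s) \<notin> X" by (rule nos)
    show "\<And>v. (t, v) \<notin> X" by (rule no_t)
    show "s \<noteq> t" by (rule st(1))
    show "\<And>u v. (u, v) \<in> X \<Longrightarrow> v \<noteq> t \<Longrightarrow> \<exists>w. (v, w) \<in> X" by (rule succ_ex)
    show "\<And>v w. (v, w) \<in> X \<Longrightarrow> v \<noteq> s \<Longrightarrow> \<exists>u. (u, v) \<in> X" by (rule pred_ex)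
    show "\<And>u u' v. (u, v) \<in> X \<Longrightarrow> (u', v) \<in> X \<Longrightarrow> v \<noteq> t \<Longrightarrow> u = u'" by (rule pred_un)
    show "\<And>u v w. (u, v) \<in> X \<Longrightarrow> (v, w) \<in> X \<Longrightarrow> f (v, w) = f (u, v) - d (v, w)" by (rule fcons)
    show "\<And>v. (s, v) \<in> X \<Longrightarrow> f (s, v) = T - d (s, v)" by (rule fs)
    show "\<And>a. a \<in> X \<Longrightarrow> f a \<ge> 0" using fnn unfolding X_def by blast
    show "\<And>a. a \<in> X \<Longrightarrow> d a > 0" using I unfolding X_def by blast
  qed
  interpret C: stopctx N A X s t d f T by (rule ctx)
  have iM: "i \<in> N - {s, t}" and jM: "j \<in> N - {s, t}" using C by auto
  have tV: "t \<notin> V" and iV: "i \<in> V" and jV: "j \<in> V" using assms(4,5) by auto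
  have yX: "\<exists>w. (v, w) \<in> X" if "v \<in> N - {s, t}" "y v = 1" for v
  proof -
    have "(\<Sum>w\<in>out_nbrs A N v. x (v, w)) \<ge> 1" using outy[OF that(1)] that by simp
    then obtain w where "w \<in> out_nbrs A N v" "x (v, w) = 1" using sum01_ex1[OF finout xout01] by blast
    then show ?thesis unfolding X_def out_nbrs_def by auto
  qed
  have noboth: "\<not> (j \<in> set W)" if "xw X W" "hd W = s" "last W = t" "i \<in> set W" for W
  proof
    assume "j \<in> set W"
    then have "path_time d W > T" using C C.walk_path[OF that(1-3)] that(4) by blast
    then show False using C.time_le[OF that(1-3)] by simp
  qed
  have fincut: "finite (out_cut A N V)" using finA unfolding out_cut_def
    by (rule rev_finite_subset) auto
  have cut01: "\<forall>e\<in>out_cut A N V. x e \<in> {0, 1}" using x01 unfolding out_cut_def by auto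
  have cutnn: "\<forall>e\<in>out_cut A N V. x e \<ge> 0" using cut01 by force
  have inX: "(u, v) \<in> out_cut A N V" if "(u, v) \<in> X" "u \<in> V" "v \<notin> V" for u v
    using that XN unfolding X_def out_cut_def by auto
  have yi: "y i \<in> {0, 1}" and yj: "y j \<in> {0, 1}" using y01 iM jM by auto
  show ?thesis
  proof (cases "y i = 1")
    case yi1: True
    obtain wi where "(i, wi) \<in> X" using yX[OF iM yi1] by blast
    then obtain Ai ui vi Wi where Ri: "xw X Ai" "hd Ai = s" "last Ai = ui" "i \<in> set Ai" "(ui, vi) \<in> X"
      "ui \<in> V" "vi \<notin> V" "xw X Wi" "hd Wi = s" "last Wi = t" "set Ai \<subseteq> set Wi"
      using C.route[OF _ iV tV] by blast
    have ei: "(ui, vi) \<in> out_cut A N V" using inX Ri by blast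
    show ?thesis
    proof (cases "y j = 1")
      case yj1: True
      obtain wj where "(j, wj) \<in> X" using yX[OF jM yj1] by blast
      then obtain Aj uj vj Wj where Rj: "xw X Aj" "hd Aj = s" "last Aj = uj" "j \<in> set Aj" "(uj, vj) \<in> X"
        "uj \<in> V" "vj \<notin> V" "xw X Wj" "hd Wj = s" "last Wj = t" "set Aj \<subseteq> set Wj"
        using C.route[OF _ jV tV] by blast
      have ej: "(uj, vj) \<in> out_cut A N V" using inX Rj by blast
      have ne: "(ui, vi) \<noteq> (uj, vj)"
      proof
        assume eq: "(ui, vi) = (uj, vj)"
        have "ui \<noteq> t" using Ri tV by auto
        then have "Ai = Aj" using C.walk_unique[OF Ri(1) Rj(1) Ri(2) Rj(2)] Ri(3) Rj(3) eq by simp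
        then have "j \<in> set Wi" using Rj(4) Ri(11) by auto
        then show False using noboth[OF Ri(8-10)] Ri(4,11) by auto
      qed
      have "(\<Sum>e\<in>{(ui, vi), (uj, vj)}. x e) \<le> (\<Sum>e\<in>out_cut A N V. x e)"
        by (rule sum_mono2[OF fincut]) (use ei ej cutnn in auto)
      then show ?thesis using ne Ri(5) Rj(5) yi1 yj1 unfolding X_def by simp
    next
      case False
      then have yj0: "y j = 0" using yj by simp
      have "x (ui, vi) \<le> (\<Sum>e\<in>out_cut A N V. x e)"
        using member_le_sum[of "(ui, vi)" "out_cut A N V" x] ei cutnn fincut by blast
      then show ?thesis using yi1 yj0 Ri(5) unfolding X_def by simp
    qed
  next
    case False
    then have yi0: "y i = 0" using yi by simp
    show ?thesis
    proof (cases "y j = 1")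
      case yj1: True
      obtain wj where "(j, wj) \<in> X" using yX[OF jM yj1] by blast
      then obtain Aj uj vj Wj where Rj: "xw X Aj" "hd Aj = s" "last Aj = uj" "j \<in> set Aj" "(uj, vj) \<in> X"
        "uj \<in> V" "vj \<notin> V" "xw X Wj" "hd Wj = s" "last Wj = t" "set Aj \<subseteq> set Wj"
        using C.route[OF _ jV tV] by blast
      have ej: "(uj, vj) \<in> out_cut A N V" using inX Rj by blast
      have "x (uj, vj) \<le> (\<Sum>e\<in>out_cut A N V. x e)"
        using member_le_sum[of "(uj, vj)" "out_cut A N V" x] ej cutnn fincut by blast
      then show ?thesis using yi0 yj1 Rj(5) unfolding X_def by simp
    next
      case False
      then have "y j = 0" using yj by simp
      moreover have "(\<Sum>e\<in>out_cut A N V. x e) \<ge> 0" using cutnn by (simp add: sum_nonneg)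
      ultimately show ?thesis using yi0 by simp
    qed
  qed
qed

end
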